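(* Let $G$ be a unimodular locally compact group and let $\nu$ be a measure on $G$. Then: (a) $\nu$ is upper translation bounded if and only if $\mathrm{L}_\nu^+$ is finite; (b) $\nu$ is lower translation bounded if and only if $\mathrm{L}_\nu^-$ is positive; (c) $\nu$ is a Delone measure if and only if $\mathrm{L}_\nu^-$ is positive and $\mathrm{L}_\nu^+$ is finite.
   Context: A measure is a positive Borel measure. $\nu$ is upper translation bounded if there exist $C_u<\infty$ and a compact symmetric unit neighborhood $B_u$ with $\sup_{x\in G}\nu(B_ux)\le C_u$; lower translation bounded if there exist $C_l>0$ and a compact symmetric unit neighborhood $B_l$ with $\inf_{x\in G}\nu(B_lx)\ge C_l$; a Delone measure if both. With a Haar measure $m$, $\mathcal K$ the nonempty compact subsets and $\mathcal K_p$ those of positive Haar measure: $\mathrm{L}_\nu^-=\sup_{K\in \mathcal K}\inf_{A\in \mathcal K_p} \nu(KA)/m(A)$, $\mathrm{L}_\nu^+=\inf_{K\in \mathcal K}\sup_{A\in \mathcal K_p} \nu(A)/m(KA)$. *)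

theory Defs
  imports "HOL-Analysis.Analysis"
begin

text \<open>The group G is a type of class topological_group_add (group operation written
  additively, NOT assumed commutative), Hausdorff, and locally compact.
  Product of sets K A = {k + a}.\<close>

definition setprod :: "'a::plus set \<Rightarrow> 'a set \<Rightarrow> 'a set" where
  "setprod K A = {k + a | k a. k \<in> K \<and> a \<in> A}"

definition haar_measure :: "'a::topological_group_add measure \<Rightarrow> bool" where
  "haar_measure m \<longleftrightarrow>
     sets m = sets borel \<and>
     (\<forall>x. \<forall>A\<in>sets borel. emeasure m ((\<lambda>a. x + a) ` A) = emeasure m A) \<and>
     (\<forall>K. compact K \<longrightarrow> emeasure m K < \<infinity>) \<and>
     (\<forall>U. open U \<and> U \<noteq> {} \<longrightarrow> emeasure m U > 0) \<and>
     (\<forall>A\<in>sets borel. emeasure m A = (INF U\<in>{U. open U \<and> A \<subseteq> U}. emeasure m U)) \<and>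
     (\<forall>U. open U \<longrightarrow> emeasure m U = (SUP K\<in>{K. compact K \<and> K \<subseteq> U}. emeasure m K))"

definition unimodular :: "'a::topological_group_add measure \<Rightarrow> bool" where
  "unimodular m \<longleftrightarrow>
     (\<forall>x. \<forall>A\<in>sets borel. emeasure m ((\<lambda>a. a + x) ` A) = emeasure m A)"

definition sym_unit_nbhd :: "'a::topological_group_add set \<Rightarrow> bool" where
  "sym_unit_nbhd B \<longleftrightarrow> compact B \<and> uminus ` B = B \<and> 0 \<in> interior B"

definition upper_translation_bounded :: "'a::topological_group_add measure \<Rightarrow> bool" where
  "upper_translation_bounded \<nu> \<longleftrightarrow>
     (\<exists>C B. C < \<infinity> \<and> sym_unit_nbhd B \<and>
        (SUP x. emeasure \<nu> ((\<lambda>b. b + x) ` B)) \<le> C)"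

definition lower_translation_bounded :: "'a::topological_group_add measure \<Rightarrow> bool" where
  "lower_translation_bounded \<nu> \<longleftrightarrow>
     (\<exists>C B. C > 0 \<and> sym_unit_nbhd B \<and>
        (INF x. emeasure \<nu> ((\<lambda>b. b + x) ` B)) \<ge> C)"

definition delone_measure :: "'a::topological_group_add measure \<Rightarrow> bool" where
  "delone_measure \<nu> \<longleftrightarrow> upper_translation_bounded \<nu> \<and> lower_translation_bounded \<nu>"

definition cpt_sets :: "'a::topological_space set set" where
  "cpt_sets = {K. compact K \<and> K \<noteq> {}}"

definition cpt_pos_sets :: "'a::topological_space measure \<Rightarrow> 'a set set" where
  "cpt_pos_sets m = {A. compact A \<and> emeasure m A > 0}"

definition L_minus :: "'a::topological_group_add measure \<Rightarrow> 'a measure \<Rightarrow> ennreal" where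
  "L_minus m \<nu> = (SUP K\<in>cpt_sets. INF A\<in>cpt_pos_sets m.
       emeasure \<nu> (setprod K A) / emeasure m A)"

definition L_plus :: "'a::topological_group_add measure \<Rightarrow> 'a measure \<Rightarrow> ennreal" where
  "L_plus m \<nu> = (INF K\<in>cpt_sets. SUP A\<in>cpt_pos_sets m.
       emeasure \<nu> A / emeasure m (setprod K A))"

end

theory Submission
  imports Defs
begin

lemma ediv_self: "0 < b \<Longrightarrow> b < \<infinity> \<Longrightarrow> b / b = (1::ennreal)"
  by (intro ennreal_divide_self) auto

lemma ediv_mult_cancel: "0 < b \<Longrightarrow> b < \<infinity> \<Longrightarrow> a / b * b = (a::ennreal)"
proof -
  assume "0 < b" "b < \<infinity>"
  have "a / b * b = a * (b / b)" by (rule ennreal_divide_times)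
  also have "\<dots> = a" using ediv_self[OF \<open>0 < b\<close> \<open>b < \<infinity>\<close>] by simp
  finally show ?thesis .
qed

lemma ediv_le_iff: assumes "0 < b" "b < \<infinity>" shows "(a / b \<le> c) \<longleftrightarrow> a \<le> c * (b::ennreal)"
proof
  assume "a / b \<le> c"
  hence "a / b * b \<le> c * b" by (rule mult_right_mono) simp
  thus "a \<le> c * b" by (simp only: ediv_mult_cancel[OF assms])
next
  assume "a \<le> c * b" thus "a / b \<le> c" using assms(1) by (intro divide_le_posI_ennreal) (simp_all only: mult.commute)
qed

lemma le_ediv_iff: assumes "0 < b" "b < \<infinity>" shows "(c \<le> a / b) \<longleftrightarrow> c * b \<le> (a::ennreal)"
proof
  assume "c \<le> a / b"
  hence "c * b \<le> a / b * b" by (rule mult_right_mono) simp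
  thus "c * b \<le> a" by (simp only: ediv_mult_cancel[OF assms])
next
  assume "c * b \<le> a"
  hence "c * b / b \<le> a / b" by (rule divide_right_mono_ennreal)
  moreover have "c * b / b = c * (b / b)" by (rule ennreal_times_divide[symmetric])
  ultimately show "c \<le> a / b" using ediv_self[OF assms] by simp
qed

lemma ediv_lt_top: assumes "c < \<infinity>" "0 < b" shows "c / b < (\<infinity>::ennreal)"
proof -
  have "inverse b < top" using assms by (simp add: less_top[symmetric])
  thus ?thesis using assms by (simp add: divide_ennreal_def ennreal_mult_less_top)
qed

context
  fixes dummy :: "'a::{topological_group_add, t2_space}"
begin

lemma cont_transl: "continuous_on S (\<lambda>b::'a. b + x)"
  by (intro continuous_intros)

lemma compact_transl: "compact (S::'a set) \<Longrightarrow> compact ((\<lambda>b. b + x) ` S)"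
  by (rule compact_continuous_image[OF cont_transl])

lemma open_transl: assumes "open (S::'a set)" shows "open ((\<lambda>b. b + x) ` S)"
proof -
  have "(\<lambda>b. b + x) ` S = (\<lambda>y. y + - x) -` S"
    by (auto simp: image_iff add.assoc) (metis diff_add_cancel)
  moreover have "open ((\<lambda>y. y + - x) -` S)"
    by (rule continuous_open_vimage[OF assms]) (intro continuous_intros)
  ultimately show ?thesis by simp
qed

lemma setprod_eq: "setprod K A = (\<lambda>p. fst p + snd p) ` (K \<times> (A::'a set))"
  unfolding setprod_def by force

lemma compact_setprod: "compact (K::'a set) \<Longrightarrow> compact A \<Longrightarrow> compact (setprod K A)"
  unfolding setprod_eq
  by (intro compact_continuous_image compact_Times) (intro continuous_intros)

lemma setprod_transl: "setprod K ((\<lambda>b. b + x) ` A) = (\<lambda>b. b + x) ` (setprod K (A::'a set))"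
  unfolding setprod_def by (force simp: add.assoc)

lemma open_setprod: "open (W::'a set) \<Longrightarrow> open (setprod W A)"
proof -
  assume "open W"
  have "setprod W A = (\<Union>a\<in>A. (\<lambda>b. b + a) ` W)" unfolding setprod_def by auto
  thus ?thesis using open_transl[OF \<open>open W\<close>] by auto
qed

lemma nbhd_diff:
  assumes "open S" "(0::'a) \<in> S"
  shows "\<exists>U. open U \<and> 0 \<in> U \<and> (\<forall>u\<in>U. \<forall>v\<in>U. - u + v \<in> S)"
proof -
  have id: "((\<lambda>x::'a\<times>'a. x) \<longlongrightarrow> (0,0)) (nhds (0,0))" by (rule filterlim_ident)
  have "((\<lambda>p::'a\<times>'a. - fst p + snd p) \<longlongrightarrow> - fst (0::'a,0::'a) + snd (0::'a,0::'a)) (nhds (0,0))"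
    by (intro tendsto_add tendsto_minus tendsto_fst tendsto_snd id)
  hence "((\<lambda>p::'a\<times>'a. - fst p + snd p) \<longlongrightarrow> 0) (nhds (0,0))" by simp
  hence "eventually (\<lambda>p. - fst p + snd p \<in> S) (nhds ((0::'a),(0::'a)))"
    by (rule topological_tendstoD[OF _ assms])
  hence "eventually (\<lambda>p. - fst p + snd p \<in> S) (nhds (0::'a) \<times>\<^sub>F nhds 0)"
    by (simp only: nhds_prod)
  then obtain Q where Q: "eventually Q (nhds (0::'a))"
    "\<forall>x y. Q x \<longrightarrow> Q y \<longrightarrow> - fst (x,y) + snd (x,y) \<in> S"
    unfolding eventually_prod_same by blast
  from Q(1) obtain U where U: "open U" "0 \<in> U" "\<forall>x\<in>U. Q x" unfolding eventually_nhds by blast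
  have "\<forall>u\<in>U. \<forall>v\<in>U. - u + v \<in> S"
  proof (intro ballI)
    fix u v assume "u \<in> U" "v \<in> U"
    hence "Q u" "Q v" using U(3) by blast+
    thus "- u + v \<in> S" using Q(2) by simp
  qed
  thus ?thesis using U(1,2) by blast
qed

lemma ex_sym:
  assumes "locally_compact_space (euclidean :: 'a topology)"
  shows "\<exists>B::'a set. sym_unit_nbhd B"
proof -
  have "\<exists>U K. openin euclidean U \<and> compactin euclidean K \<and> (0::'a) \<in> U \<and> U \<subseteq> K"
    using assms unfolding locally_compact_space_def by simp
  then obtain U K where UK0: "openin euclidean U" "compactin euclidean K" "(0::'a) \<in> U" "U \<subseteq> K"
    by blast
  have UK: "open U" "compact K"
    using open_openin[THEN iffD2, OF UK0(1)] compactin_euclidean_iff[THEN iffD1, OF UK0(2)] by auto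
  define B where "B = K \<inter> uminus ` K"
  have "compact (uminus ` K)"
    by (rule compact_continuous_image[OF _ UK(2)]) (intro continuous_intros)
  hence cB: "compact B" unfolding B_def by (rule compact_Int[OF UK(2)])
  have inj: "inj (uminus :: 'a \<Rightarrow> 'a)" by (rule injI) simp
  have uu: "uminus ` uminus ` K = K" by (simp add: image_image)
  have sB: "uminus ` B = B"
    unfolding B_def image_Int[OF inj] uu by (rule Int_commute)
  have "open (uminus -` U)"
    using UK(1) by (rule continuous_open_vimage) (intro continuous_intros)
  hence oV: "open (U \<inter> uminus -` U)" using UK(1) by (intro open_Int)
  have sub: "U \<inter> uminus -` U \<subseteq> B"
  proof
    fix x assume x: "x \<in> U \<inter> uminus -` U"
    hence "x \<in> K" "- x \<in> K" using UK0(4) by auto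
    moreover have "x = - (- x)" by simp
    ultimately show "x \<in> B" unfolding B_def by (metis IntI image_eqI)
  qed
  have "0 \<in> U \<inter> uminus -` U" using UK0(3) by simp
  hence "0 \<in> interior B" using oV sub by (meson interior_maximal interior_open subsetD)
  thus ?thesis using cB sB unfolding sym_unit_nbhd_def by blast
qed

lemma pack:
  fixes m :: "'a measure" and W A :: "'a set"
  assumes W: "W \<in> sets m" "emeasure m W > 0"
    and Tm: "\<forall>x. (\<lambda>b. b + x) ` W \<in> sets m" "\<forall>x. emeasure m ((\<lambda>b. b + x) ` W) = emeasure m W"
    and WA: "setprod W A \<in> sets m" "emeasure m (setprod W A) < \<infinity>"
  shows "\<exists>F. finite F \<and> F \<subseteq> A \<and> of_nat (card F) * emeasure m W \<le> emeasure m (setprod W A)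
    \<and> disjoint_family_on (\<lambda>x. (\<lambda>b. b + x) ` W) F
    \<and> (\<forall>a\<in>A. \<exists>x\<in>F. (\<lambda>b. b + a) ` W \<inter> (\<lambda>b. b + x) ` W \<noteq> {})"
proof (cases "A = {}")
  case True then show ?thesis by (intro exI[of _ "{}"]) (simp add: disjoint_family_on_def)
next
  case False
  define T where "T x = (\<lambda>b. b + x) ` W" for x
  define P where "P F \<longleftrightarrow> finite F \<and> F \<subseteq> A \<and> disjoint_family_on T F" for F
  have key: "of_nat (card F) * emeasure m W \<le> emeasure m (setprod W A)" if "P F" for F
  proof -
    have TF: "T ` F \<subseteq> sets m" using Tm by (auto simp: T_def)
    have "of_nat (card F) * emeasure m W = (\<Sum>x\<in>F. emeasure m (T x))" using Tm by (simp add: T_def)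
    also have "\<dots> = emeasure m (\<Union>x\<in>F. T x)" using that TF
      by (intro sum_emeasure) (auto simp: P_def)
    also have "\<dots> \<le> emeasure m (setprod W A)" using that WA
      by (intro emeasure_mono) (auto simp: P_def T_def setprod_def)
    finally show ?thesis .
  qed
  from False obtain a0 where "a0 \<in> A" by auto
  have "emeasure m W = emeasure m (T a0)" using Tm by (simp add: T_def)
  also have "\<dots> \<le> emeasure m (setprod W A)" using \<open>a0\<in>A\<close> WA
    by (intro emeasure_mono) (auto simp: T_def setprod_def)
  finally have Wfin: "emeasure m W < \<infinity>" using WA by simp
  obtain w where w: "emeasure m W = ennreal w" "w > 0" using W Wfin by (cases "emeasure m W") auto
  obtain M where M: "emeasure m (setprod W A) = ennreal M" "M \<ge> 0" using WA by (cases "emeasure m (setprod W A)") auto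
  have bound: "card F \<le> nat \<lceil>M / w\<rceil>" if "P F" for F
  proof -
    have "ennreal (real (card F) * w) \<le> ennreal M" using key[OF that] w M
      by (simp add: ennreal_mult ennreal_of_nat_eq_real_of_nat)
    hence "real (card F) * w \<le> M" using M by (simp add: ennreal_le_iff)
    hence "real (card F) \<le> M / w" using w by (simp add: field_simps)
    hence "real (card F) \<le> of_int \<lceil>M / w\<rceil>" using le_of_int_ceiling order_trans by blast
    thus ?thesis by linarith
  qed
  have "P {}" by (simp add: P_def disjoint_family_on_def)
  hence "\<exists>x. (\<exists>F. P F \<and> card F = x) \<and> (\<forall>y. (\<exists>F. P F \<and> card F = y) \<longrightarrow> y \<le> x)"
    by (intro Nat.ex_has_greatest_nat[of _ 0 "nat \<lceil>M / w\<rceil>"]) (use bound in auto)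
  then obtain n where n: "\<exists>F. P F \<and> card F = n" "\<forall>k. (\<exists>F. P F \<and> card F = k) \<longrightarrow> k \<le> n"
    by blast
  then obtain F where F: "P F" "card F = n" by blast
  have cover: "\<exists>x\<in>F. T a \<inter> T x \<noteq> {}" if "a \<in> A" for a
  proof (rule ccontr)
    assume "\<not> ?thesis"
    hence dis: "\<forall>x\<in>F. T a \<inter> T x = {}" by auto
    have "W \<noteq> {}" using W by auto
    hence "a \<notin> F" using dis by (auto simp: T_def)
    have "disjoint_family_on T (insert a F)"
      using F(1) dis unfolding P_def disjoint_family_on_def by (metis Int_commute insert_iff)
    hence "P (insert a F)" using F(1) that unfolding P_def by auto
    moreover have "card (insert a F) = n + 1" using F \<open>a\<notin>F\<close> by (simp add: P_def)
    ultimately show False using n(2) by fastforce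
  qed
  show ?thesis using F key[OF F(1)] cover unfolding P_def T_def by blast
qed

end

theorem lemma3p8:
  fixes m \<nu> :: "'a::{topological_group_add, t2_space} measure"
  assumes "locally_compact_space (euclidean :: 'a topology)"
    and "haar_measure m"
    and "unimodular m"
    and "sets \<nu> = sets borel"
  shows "(upper_translation_bounded \<nu> \<longleftrightarrow> L_plus m \<nu> < \<infinity>)
    \<and> (lower_translation_bounded \<nu> \<longleftrightarrow> L_minus m \<nu> > 0)
    \<and> (delone_measure \<nu> \<longleftrightarrow> L_minus m \<nu> > 0 \<and> L_plus m \<nu> < \<infinity>)"
proof -
  note H = assms(2)[unfolded haar_measure_def]
  have sm: "sets m = sets borel" using H by (rule conjunct1)
  have linv: "\<And>x A. A \<in> sets borel \<Longrightarrow> emeasure m ((\<lambda>a. x + a) ` A) = emeasure m A"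
    using H[THEN conjunct2, THEN conjunct1] by blast
  have rinv: "\<And>x A. A \<in> sets borel \<Longrightarrow> emeasure m ((\<lambda>a. a + x) ` A) = emeasure m A"
    using assms(3)[unfolded unimodular_def] by blast
  have fin: "\<And>K. compact K \<Longrightarrow> emeasure m K < \<infinity>"
    using H[THEN conjunct2, THEN conjunct2, THEN conjunct1] by blast
  have pos: "\<And>U. open U \<Longrightarrow> U \<noteq> {} \<Longrightarrow> emeasure m U > 0"
    using H[THEN conjunct2, THEN conjunct2, THEN conjunct2, THEN conjunct1] by blast
  have cb: "\<And>K::'a set. compact K \<Longrightarrow> K \<in> sets borel" by (simp add: borel_closed compact_imp_closed)
  have sympos: "0 < emeasure m B \<and> emeasure m B < \<infinity> \<and> B \<in> sets borel \<and> compact B \<and> (0::'a) \<in> B"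
    if "sym_unit_nbhd B" for B
  proof -
    have cB: "compact B" "0 \<in> interior B" using that by (auto simp: sym_unit_nbhd_def)
    have "0 < emeasure m (interior B)" using cB by (intro pos) auto
    also have "\<dots> \<le> emeasure m B" using cB sm cb by (intro emeasure_mono interior_subset) auto
    finally show ?thesis using cB fin cb interior_subset by blast
  qed

  have A1: "L_plus m \<nu> < \<infinity>" if hyp: "upper_translation_bounded \<nu>"
  proof -
    obtain C B where CB: "C < \<infinity>" "sym_unit_nbhd B" "(SUP x. emeasure \<nu> ((\<lambda>b. b + x) ` B)) \<le> C"
      using hyp unfolding upper_translation_bounded_def by blast
    have Cx: "emeasure \<nu> ((\<lambda>b. b + x) ` B) \<le> C" for x using CB(3) by (simp add: SUP_le_iff)
    note Bp = sympos[OF CB(2)]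
    have "open (interior B)" "0 \<in> interior B" using CB(2) by (auto simp: sym_unit_nbhd_def)
    then obtain U where U: "open U" "0 \<in> U" "\<forall>u\<in>U. \<forall>v\<in>U. - u + v \<in> interior B"
      using nbhd_diff by blast
    have UB: "U \<subseteq> B"
    proof
      fix u assume "u \<in> U"
      then have "- 0 + u \<in> interior B" using U by blast
      thus "u \<in> B" using interior_subset by auto
    qed
    have mU: "0 < emeasure m U" "emeasure m U < \<infinity>"
    proof -
      show "0 < emeasure m U" using pos[OF U(1)] U(2) by blast
      have "emeasure m U \<le> emeasure m B" using UB Bp sm by (intro emeasure_mono) auto
      thus "emeasure m U < \<infinity>" using Bp by auto
    qed
    have bound: "emeasure \<nu> A / emeasure m (setprod B A) \<le> C / emeasure m U" if A: "A \<in> cpt_pos_sets m" for A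
    proof -
      have cA: "compact A" "0 < emeasure m A" using A by (auto simp: cpt_pos_sets_def)
      have UA: "setprod U A \<subseteq> setprod B A" using UB unfolding setprod_def by blast
      have cBA: "compact (setprod B A)" using Bp cA compact_setprod by blast
      have "\<exists>F. finite F \<and> F \<subseteq> A \<and> of_nat (card F) * emeasure m U \<le> emeasure m (setprod U A)
        \<and> disjoint_family_on (\<lambda>x. (\<lambda>b. b + x) ` U) F
        \<and> (\<forall>a\<in>A. \<exists>x\<in>F. (\<lambda>b. b + a) ` U \<inter> (\<lambda>b. b + x) ` U \<noteq> {})"
      proof (rule pack)
        show "U \<in> sets m" using U(1) sm by simp
        show "0 < emeasure m U" by (rule mU)
        show "\<forall>x. (\<lambda>b. b + x) ` U \<in> sets m" using open_transl[OF U(1)] sm by simp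
        show "\<forall>x. emeasure m ((\<lambda>b. b + x) ` U) = emeasure m U" using rinv U(1) by simp
        show "setprod U A \<in> sets m" using open_setprod[OF U(1)] sm by simp
        have "emeasure m (setprod U A) \<le> emeasure m (setprod B A)"
          using UA cBA sm cb by (intro emeasure_mono) auto
        thus "emeasure m (setprod U A) < \<infinity>" using fin[OF cBA] by simp
      qed
      then obtain F where F: "finite F" "F \<subseteq> A" "of_nat (card F) * emeasure m U \<le> emeasure m (setprod U A)"
        "\<forall>a\<in>A. \<exists>x\<in>F. (\<lambda>b. b + a) ` U \<inter> (\<lambda>b. b + x) ` U \<noteq> {}" by blast
      have cov: "A \<subseteq> (\<Union>x\<in>F. (\<lambda>b. b + x) ` B)"
      proof
        fix a assume "a \<in> A"
        then obtain x u u' where xu: "x \<in> F" "u \<in> U" "u' \<in> U" "u + a = u' + x" using F(4) by blast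
        hence "a = (- u + u') + x" by (metis add.assoc minus_add_cancel)
        moreover have "- u + u' \<in> B" using U(3) xu interior_subset by blast
        ultimately show "a \<in> (\<Union>x\<in>F. (\<lambda>b. b + x) ` B)" using xu by blast
      qed
      have TBs: "(\<lambda>x. (\<lambda>b. b + x) ` B) ` F \<subseteq> sets \<nu>" using assms(4) compact_transl cb Bp by auto
      have "emeasure \<nu> A \<le> emeasure \<nu> (\<Union>x\<in>F. (\<lambda>b. b + x) ` B)"
        using cov TBs F by (intro emeasure_mono sets.finite_UN) auto
      also have "\<dots> \<le> (\<Sum>x\<in>F. emeasure \<nu> ((\<lambda>b. b + x) ` B))"
        using F TBs by (intro emeasure_subadditive_finite) auto
      also have "\<dots> \<le> (\<Sum>x\<in>F. C)" using Cx by (intro sum_mono) auto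
      also have "\<dots> = of_nat (card F) * C" by simp
      also have "\<dots> = of_nat (card F) * (C / emeasure m U * emeasure m U)"
        using ediv_self[OF mU] by (simp add: ennreal_divide_times)
      also have "\<dots> = C / emeasure m U * (of_nat (card F) * emeasure m U)" by (simp add: ac_simps)
      also have "\<dots> \<le> C / emeasure m U * emeasure m (setprod B A)"
        using F(3) UA cBA sm cb by (intro mult_left_mono order_trans[OF _ emeasure_mono[OF UA]]) auto
      finally have le: "emeasure \<nu> A \<le> C / emeasure m U * emeasure m (setprod B A)" .
      have "A \<subseteq> setprod B A" using Bp unfolding setprod_def by force
      hence "emeasure m A \<le> emeasure m (setprod B A)" using cBA sm cb by (intro emeasure_mono) auto
      hence "0 < emeasure m (setprod B A)" using cA by simp
      thus ?thesis using le ediv_le_iff fin[OF cBA] by blast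
    qed
    have "B \<in> cpt_sets" using Bp by (auto simp: cpt_sets_def)
    hence "L_plus m \<nu> \<le> (SUP A\<in>cpt_pos_sets m. emeasure \<nu> A / emeasure m (setprod B A))"
      unfolding L_plus_def by (rule INF_lower)
    also have "\<dots> \<le> C / emeasure m U" using bound by (rule SUP_least)
    also have "\<dots> < \<infinity>" using CB(1) mU(1) by (rule ediv_lt_top)
    finally show ?thesis .
  qed

  have A2: "upper_translation_bounded \<nu>" if hyp: "L_plus m \<nu> < \<infinity>"
  proof -
    from hyp obtain K where K: "K \<in> cpt_sets"
      "(SUP A\<in>cpt_pos_sets m. emeasure \<nu> A / emeasure m (setprod K A)) < \<infinity>"
      unfolding L_plus_def by (auto simp: INF_less_iff)
    define c where "c = (SUP A\<in>cpt_pos_sets m. emeasure \<nu> A / emeasure m (setprod K A))"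
    obtain B :: "'a set" where B: "sym_unit_nbhd B" using ex_sym[OF assms(1)] by blast
    note Bp = sympos[OF B]
    have cK: "compact K" "K \<noteq> {}" using K by (auto simp: cpt_sets_def)
    have cKB: "compact (setprod K B)" using cK Bp compact_setprod by blast
    have KBpos: "0 < emeasure m (setprod K B)"
    proof -
      obtain k where "k \<in> K" using cK by auto
      have "(\<lambda>a. k + a) ` B \<subseteq> setprod K B" using \<open>k\<in>K\<close> unfolding setprod_def by blast
      hence "emeasure m ((\<lambda>a. k + a) ` B) \<le> emeasure m (setprod K B)"
        using sm cb cKB by (intro emeasure_mono) auto
      hence "emeasure m B \<le> emeasure m (setprod K B)" using linv[of B k] Bp by simp
      thus ?thesis using Bp by (meson less_le_trans)
    qed
    have KBfin: "emeasure m (setprod K B) < \<infinity>" using fin cKB by blast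
    have each: "emeasure \<nu> ((\<lambda>b. b + x) ` B) \<le> c * emeasure m (setprod K B)" for x
    proof -
      have "(\<lambda>b. b + x) ` B \<in> cpt_pos_sets m"
        using compact_transl Bp rinv[of B x] by (auto simp: cpt_pos_sets_def)
      hence "emeasure \<nu> ((\<lambda>b. b + x) ` B) / emeasure m (setprod K ((\<lambda>b. b + x) ` B)) \<le> c"
        unfolding c_def by (rule SUP_upper)
      moreover have "emeasure m (setprod K ((\<lambda>b. b + x) ` B)) = emeasure m (setprod K B)"
        unfolding setprod_transl using rinv cb cKB by blast
      ultimately show ?thesis using ediv_le_iff[OF KBpos KBfin] by simp
    qed
    have "(SUP x. emeasure \<nu> ((\<lambda>b. b + x) ` B)) \<le> c * emeasure m (setprod K B)"
      using each by (rule SUP_least)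
    moreover have "c * emeasure m (setprod K B) < \<infinity>"
      using K(2) KBfin unfolding c_def by (simp add: ennreal_mult_less_top)
    ultimately show ?thesis unfolding upper_translation_bounded_def using B by blast
  qed

  have B1: "0 < L_minus m \<nu>" if hyp: "lower_translation_bounded \<nu>"
  proof -
    obtain C B where CB: "C > 0" "sym_unit_nbhd B" "(INF x. emeasure \<nu> ((\<lambda>b. b + x) ` B)) \<ge> C"
      using hyp unfolding lower_translation_bounded_def by blast
    have Cx: "C \<le> emeasure \<nu> ((\<lambda>b. b + x) ` B)" for x using CB(3) by (simp add: le_INF_iff)
    note Bp = sympos[OF CB(2)]
    have symB: "uminus ` B = B" using CB(2) by (simp add: sym_unit_nbhd_def)
    define BB where "BB = setprod B B"
    have cBB: "compact BB" unfolding BB_def using Bp compact_setprod by blast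
    have BBfin: "emeasure m BB < \<infinity>" using fin cBB by blast
    have BBpos: "0 < emeasure m BB"
    proof -
      have "B \<subseteq> BB" using Bp unfolding BB_def setprod_def by force
      hence "emeasure m B \<le> emeasure m BB" using sm cb cBB by (intro emeasure_mono) auto
      thus ?thesis using Bp by (meson less_le_trans)
    qed
    have bound: "C / emeasure m BB \<le> emeasure \<nu> (setprod B A) / emeasure m A"
      if A: "A \<in> cpt_pos_sets m" for A
    proof -
      have cA: "compact A" "0 < emeasure m A" using A by (auto simp: cpt_pos_sets_def)
      have Afin: "emeasure m A < \<infinity>" using fin cA by blast
      have cBA: "compact (setprod B A)" using Bp cA compact_setprod by blast
      have "\<exists>F. finite F \<and> F \<subseteq> A \<and> of_nat (card F) * emeasure m B \<le> emeasure m (setprod B A)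
        \<and> disjoint_family_on (\<lambda>x. (\<lambda>b. b + x) ` B) F
        \<and> (\<forall>a\<in>A. \<exists>x\<in>F. (\<lambda>b. b + a) ` B \<inter> (\<lambda>b. b + x) ` B \<noteq> {})"
      proof (rule pack)
        show "B \<in> sets m" using Bp sm by simp
        show "0 < emeasure m B" using Bp by simp
        show "\<forall>x. (\<lambda>b. b + x) ` B \<in> sets m" using compact_transl Bp cb sm by auto
        show "\<forall>x. emeasure m ((\<lambda>b. b + x) ` B) = emeasure m B" using rinv Bp by simp
        show "setprod B A \<in> sets m" using cBA cb sm by simp
        show "emeasure m (setprod B A) < \<infinity>" using fin[OF cBA] .
      qed
      then obtain F where F: "finite F" "F \<subseteq> A" "disjoint_family_on (\<lambda>x. (\<lambda>b. b + x) ` B) F"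
        "\<forall>a\<in>A. \<exists>x\<in>F. (\<lambda>b. b + a) ` B \<inter> (\<lambda>b. b + x) ` B \<noteq> {}" by blast
      have TB: "(\<lambda>x. (\<lambda>b. b + x) ` B) ` F \<subseteq> sets \<nu>" using assms(4) compact_transl cb Bp by auto
      have TBB: "(\<lambda>x. (\<lambda>b. b + x) ` BB) ` F \<subseteq> sets m" using sm compact_transl cb cBB by auto
      have cov: "A \<subseteq> (\<Union>x\<in>F. (\<lambda>b. b + x) ` BB)"
      proof
        fix a assume "a \<in> A"
        then obtain x u u' where xu: "x \<in> F" "u \<in> B" "u' \<in> B" "u + a = u' + x" using F(4) by blast
        hence "a = (- u + u') + x" by (metis add.assoc minus_add_cancel)
        moreover have "- u \<in> B" using symB xu by force
        hence "- u + u' \<in> BB" using xu unfolding BB_def setprod_def by blast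
        ultimately show "a \<in> (\<Union>x\<in>F. (\<lambda>b. b + x) ` BB)" using xu by blast
      qed
      have "emeasure m A \<le> emeasure m (\<Union>x\<in>F. (\<lambda>b. b + x) ` BB)"
        using cov TBB F by (intro emeasure_mono sets.finite_UN) auto
      also have "\<dots> \<le> (\<Sum>x\<in>F. emeasure m ((\<lambda>b. b + x) ` BB))"
        using F TBB by (intro emeasure_subadditive_finite) auto
      also have "\<dots> = of_nat (card F) * emeasure m BB" using rinv cb cBB by simp
      finally have mA: "emeasure m A \<le> of_nat (card F) * emeasure m BB" .
      have "of_nat (card F) * C = (\<Sum>x\<in>F. C)" by simp
      also have "\<dots> \<le> (\<Sum>x\<in>F. emeasure \<nu> ((\<lambda>b. b + x) ` B))" using Cx by (intro sum_mono) auto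
      also have "\<dots> = emeasure \<nu> (\<Union>x\<in>F. (\<lambda>b. b + x) ` B)" using F TB by (intro sum_emeasure) auto
      also have "\<dots> \<le> emeasure \<nu> (setprod B A)"
        using F assms(4) cb cBA by (intro emeasure_mono) (auto simp: setprod_def)
      finally have nuA: "of_nat (card F) * C \<le> emeasure \<nu> (setprod B A)" .
      have e: "C / emeasure m BB * emeasure m BB = C"
        using ediv_self[OF BBpos BBfin] by (simp add: ennreal_divide_times)
      have "C / emeasure m BB * emeasure m A \<le> C / emeasure m BB * (of_nat (card F) * emeasure m BB)"
        using mA by (rule mult_left_mono) simp
      also have "\<dots> = of_nat (card F) * (C / emeasure m BB * emeasure m BB)" by (simp add: ac_simps)
      also have "\<dots> = of_nat (card F) * C" using e by simp
      also have "\<dots> \<le> emeasure \<nu> (setprod B A)" by (rule nuA)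
      finally show ?thesis using le_ediv_iff[OF cA(2) Afin] by simp
    qed
    have "B \<in> cpt_sets" using Bp by (auto simp: cpt_sets_def)
    have "0 < C / emeasure m BB" using CB(1) BBfin by (simp add: ennreal_zero_less_divide)
    also have "\<dots> \<le> (INF A\<in>cpt_pos_sets m. emeasure \<nu> (setprod B A) / emeasure m A)"
      using bound by (rule INF_greatest)
    also have "\<dots> \<le> L_minus m \<nu>" unfolding L_minus_def using \<open>B \<in> cpt_sets\<close> by (rule SUP_upper)
    finally show ?thesis .
  qed

  have B2: "lower_translation_bounded \<nu>" if hyp: "0 < L_minus m \<nu>"
  proof -
    from hyp obtain K where K: "K \<in> cpt_sets"
      "0 < (INF A\<in>cpt_pos_sets m. emeasure \<nu> (setprod K A) / emeasure m A)"
      unfolding L_minus_def by (auto simp: less_SUP_iff)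
    define c where "c = (INF A\<in>cpt_pos_sets m. emeasure \<nu> (setprod K A) / emeasure m A)"
    obtain V :: "'a set" where V: "sym_unit_nbhd V" using ex_sym[OF assms(1)] by blast
    note Vp = sympos[OF V]
    have cK: "compact K" using K by (auto simp: cpt_sets_def)
    define W where "W = setprod K V \<union> V"
    hence "setprod K V \<union> V = W" by simp
    define B where "B = W \<union> uminus ` W"
    have cW: "compact W" unfolding W_def using cK Vp compact_setprod by blast
    have "compact (uminus ` W)" by (rule compact_continuous_image[OF _ cW]) (intro continuous_intros)
    hence cB: "compact B" unfolding B_def using cW by (rule compact_Un[rotated])
    have sB: "uminus ` B = B" unfolding B_def by (auto simp: image_Un image_image)
    have "V \<subseteq> B" unfolding B_def W_def by blast
    hence "0 \<in> interior B" using V interior_mono[of V B] unfolding sym_unit_nbhd_def by blast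
    hence Bs: "sym_unit_nbhd B" using cB sB by (simp add: sym_unit_nbhd_def)
    have each: "c * emeasure m V \<le> emeasure \<nu> ((\<lambda>b. b + x) ` B)" for x
    proof -
      have mVx: "emeasure m ((\<lambda>b. b + x) ` V) = emeasure m V" using rinv Vp by simp
      have "(\<lambda>b. b + x) ` V \<in> cpt_pos_sets m"
        using compact_transl Vp mVx by (auto simp: cpt_pos_sets_def)
      hence "c \<le> emeasure \<nu> (setprod K ((\<lambda>b. b + x) ` V)) / emeasure m ((\<lambda>b. b + x) ` V)"
        unfolding c_def by (rule INF_lower)
      hence "c \<le> emeasure \<nu> (setprod K ((\<lambda>b. b + x) ` V)) / emeasure m V" by (simp only: mVx)
      hence "c * emeasure m V \<le> emeasure \<nu> (setprod K ((\<lambda>b. b + x) ` V))"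
        using le_ediv_iff[of "emeasure m V" c "emeasure \<nu> (setprod K ((\<lambda>b. b + x) ` V))"] Vp by blast
      also have "\<dots> \<le> emeasure \<nu> ((\<lambda>b. b + x) ` B)"
      proof (rule emeasure_mono)
        show "setprod K ((\<lambda>b. b + x) ` V) \<subseteq> (\<lambda>b. b + x) ` B"
          unfolding setprod_transl using \<open>setprod K V \<union> V = W\<close> by (intro image_mono) (auto simp: B_def)
        show "(\<lambda>b. b + x) ` B \<in> sets \<nu>" using compact_transl[OF cB] assms(4) cb by simp
      qed
      finally show ?thesis .
    qed
    have "c * emeasure m V \<le> (INF x. emeasure \<nu> ((\<lambda>b. b + x) ` B))" using each by (rule INF_greatest)
    moreover have "0 < c * emeasure m V" using K(2) Vp unfolding c_def
      by (simp add: ennreal_zero_less_mult_iff)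
    ultimately show ?thesis unfolding lower_translation_bounded_def using Bs by blast
  qed
  show ?thesis using A1 A2 B1 B2 unfolding delone_measure_def by blast
qed

end
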